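(* Let $G$ be a finite group, $X$ a finite $G$-set and $R$ an integral domain. Assume that for every $x\in X$ and every prime divisor $p$ of $[G:\mathrm{stab}_G(x)]$ one has $\{0\}\neq pR\neq R$. Then the ring $\mathrm{End}_{RG}(RX)$ has no central idempotent different from $0$ and $1$.
   Context: $RX$ denotes the permutation $RG$-module with $R$-basis $X$. *)

theory Defs
  imports "HOL-Algebra.Group_Action" "HOL-Computational_Algebra.Primes"
begin

text \<open>The permutation module RX, realised as the R-valued functions on X
  (extended by 0 outside X); X is finite, so these are exactly the finite
  R-linear combinations of the basis X.\<close>
definition perm_module :: "'b set \<Rightarrow> ('b \<Rightarrow> 'r::idom) set" where
  "perm_module X = {f. \<forall>y. y \<notin> X \<longrightarrow> f y = 0}"

text \<open>Action of g on RX, linear extension of x \<mapsto> g x on the basis: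
  (g . f)(y) = f(g^-1 y).\<close>
definition perm_act :: "('a, 'c) monoid_scheme \<Rightarrow> ('a \<Rightarrow> 'b \<Rightarrow> 'b) \<Rightarrow> 'b set
    \<Rightarrow> 'a \<Rightarrow> ('b \<Rightarrow> 'r::idom) \<Rightarrow> ('b \<Rightarrow> 'r)" where
  "perm_act G \<phi> X g f = (\<lambda>y. if y \<in> X then f (\<phi> (inv\<^bsub>G\<^esub> g) y) else 0)"

text \<open>End_{RG}(RX): R-linear endomorphisms of RX commuting with the G-action.
  Ring structure: pointwise addition and composition.\<close>
definition End_RG :: "('a, 'c) monoid_scheme \<Rightarrow> ('a \<Rightarrow> 'b \<Rightarrow> 'b) \<Rightarrow> 'b set
    \<Rightarrow> (('b \<Rightarrow> 'r::idom) \<Rightarrow> ('b \<Rightarrow> 'r)) set" where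
  "End_RG G \<phi> X = {T.
     (\<forall>f \<in> perm_module X. T f \<in> perm_module X) \<and>
     (\<forall>f \<in> perm_module X. \<forall>h \<in> perm_module X. T (\<lambda>y. f y + h y) = (\<lambda>y. T f y + T h y)) \<and>
     (\<forall>r. \<forall>f \<in> perm_module X. T (\<lambda>y. r * f y) = (\<lambda>y. r * T f y)) \<and>
     (\<forall>g \<in> carrier G. \<forall>f \<in> perm_module X. T (perm_act G \<phi> X g f) = perm_act G \<phi> X g (T f))}"

definition central_idempotent :: "('a, 'c) monoid_scheme \<Rightarrow> ('a \<Rightarrow> 'b \<Rightarrow> 'b) \<Rightarrow> 'b set
    \<Rightarrow> (('b \<Rightarrow> 'r::idom) \<Rightarrow> ('b \<Rightarrow> 'r)) \<Rightarrow> bool" where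
  "central_idempotent G \<phi> X e \<longleftrightarrow>
     e \<in> End_RG G \<phi> X \<and>
     (\<forall>f \<in> perm_module X. e (e f) = e f) \<and>
     (\<forall>T \<in> End_RG G \<phi> X. \<forall>f \<in> perm_module X. e (T f) = T (e f))"

end

theory Submission
  imports Defs "HOL-Computational_Algebra.Polynomial_Factorial"
begin

lemma idem_trace:
  fixes M :: "'b \<Rightarrow> 'b \<Rightarrow> 'k::field"
  assumes "finite X"
    and "\<forall>x\<in>X. \<forall>y\<in>X. (\<Sum>w\<in>X. M x w * M w y) = M x y"
  shows "\<exists>r \<le> card X. (\<Sum>x\<in>X. M x x) = of_nat r \<and> (r = 0 \<longrightarrow> (\<forall>x\<in>X. \<forall>y\<in>X. M x y = 0))"
  using assms
proof (induction "card X" arbitrary: X M rule: less_induct)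
  case less
  show ?case
  proof (cases "\<forall>x\<in>X. \<forall>y\<in>X. M x y = 0")
    case True
    then show ?thesis by (intro exI[of _ 0]) auto
  next
    case False
    then obtain z y0 where z: "z \<in> X" and y0: "y0 \<in> X" and nz: "M z y0 \<noteq> 0" by blast
    define X' where "X' = X - {z}"
    define N where "N = (\<lambda>x y. M x y - M x y0 * M z y / M z y0)"
    have idem: "\<And>x y. x \<in> X \<Longrightarrow> y \<in> X \<Longrightarrow> (\<Sum>w\<in>X. M x w * M w y) = M x y"
      using less.prems by blast
    have Nz: "\<And>y. N z y = 0" unfolding N_def using nz by simp
    have fin: "finite X'" using less.prems unfolding X'_def by simp
    have cardlt: "card X' < card X" unfolding X'_def using z less.prems(1)
      by (intro card_Diff1_less)
    have sumX': "\<And>f. (\<Sum>w\<in>X'. N w y * f w) = (\<Sum>w\<in>X. N w y * f w)" for y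
    proof -
      fix f
      have "(\<Sum>w\<in>X. N w y * f w) = N z y * f z + (\<Sum>w\<in>X'. N w y * f w)"
        unfolding X'_def using z less.prems(1) by (simp add: sum.remove)
      then show "(\<Sum>w\<in>X'. N w y * f w) = (\<Sum>w\<in>X. N w y * f w)" using Nz by simp
    qed
    have idemN: "\<forall>x\<in>X'. \<forall>y\<in>X'. (\<Sum>w\<in>X'. N x w * N w y) = N x y"
    proof (intro ballI)
      fix x y assume x: "x \<in> X'" and y: "y \<in> X'"
      then have xX: "x \<in> X" and yX: "y \<in> X" unfolding X'_def by auto
      have "(\<Sum>w\<in>X'. N x w * N w y) = (\<Sum>w\<in>X. N w y * N x w)"
        using sumX'[of y "N x"] by (simp add: mult.commute)
      also have "\<dots> = (\<Sum>w\<in>X. M x w * M w y) - (\<Sum>w\<in>X. M x w * M w y0) * (M z y / M z y0)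
          - (M x y0 / M z y0) * (\<Sum>w\<in>X. M z w * M w y)
          + (M x y0 * M z y / (M z y0 * M z y0)) * (\<Sum>w\<in>X. M z w * M w y0)"
        unfolding N_def sum_distrib_left sum_distrib_right sum_subtractf[symmetric] sum.distrib[symmetric]
        using nz by (intro sum.cong) (auto simp: field_simps)
      also have "\<dots> = M x y - M x y0 * M z y / M z y0"
        using idem[OF xX yX] idem[OF xX y0] idem[OF z yX] idem[OF z y0] nz
        by (simp add: field_simps)
      finally show "(\<Sum>w\<in>X'. N x w * N w y) = N x y" unfolding N_def .
    qed
    obtain r where r: "r \<le> card X'" "(\<Sum>x\<in>X'. N x x) = of_nat r"
      using less.hyps[OF cardlt fin idemN] by blast
    have "(\<Sum>x\<in>X'. N x x) = (\<Sum>x\<in>X. N x x)"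
      using z less.prems(1) Nz unfolding X'_def by (simp add: sum.remove)
    also have "\<dots> = (\<Sum>x\<in>X. M x x) - (\<Sum>x\<in>X. M z x * M x y0) / M z y0"
      unfolding N_def sum_subtractf sum_divide_distrib by (simp add: mult.commute)
    also have "\<dots> = (\<Sum>x\<in>X. M x x) - 1" using idem[OF z y0] nz by simp
    finally have "(\<Sum>x\<in>X. M x x) = of_nat (Suc r)" using r by simp
    moreover have "Suc r \<le> card X" using r cardlt by simp
    ultimately show ?thesis by blast
  qed
qed

lemma of_nat_nonzero_primes:
  assumes "\<forall>p. prime p \<and> p dvd d \<longrightarrow> (of_nat p :: 'r::idom) \<noteq> 0" "d > 0"
  shows "(of_nat d :: 'r) \<noteq> 0"
  using assms
proof (induction d rule: less_induct)
  case (less d)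
  show ?case
  proof (cases "d = 1")
    case True then show ?thesis by simp
  next
    case False
    then obtain p where p: "prime p" "p dvd d" using prime_factor_nat by blast
    then obtain k where k: "d = p * k" by (auto elim: dvdE)
    have p1: "p > 1" using p prime_gt_1_nat by blast
    have kpos: "k > 0" using k less.prems(2) by (cases k) auto
    have "k < d" using k p1 kpos by simp
    moreover have "\<forall>q. prime q \<and> q dvd k \<longrightarrow> (of_nat q :: 'r) \<noteq> 0"
    proof (intro allI impI)
      fix q assume q: "prime q \<and> q dvd k"
      then have "q dvd d" using k by simp
      then show "(of_nat q :: 'r) \<noteq> 0" using less.prems(1) q by blast
    qed
    ultimately have "(of_nat k :: 'r) \<noteq> 0" using less.IH kpos by blast
    moreover have "(of_nat p :: 'r) \<noteq> 0" using less.prems(1) p by blast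
    ultimately show ?thesis using k by simp
  qed
qed

lemma nt_dvd:
  fixes \<alpha> :: "'r::idom"
  assumes n: "n > 0" and eq: "of_nat n * \<alpha> = of_nat r"
    and P: "\<forall>p. prime p \<and> p dvd n \<longrightarrow> (of_nat p :: 'r) \<noteq> 0 \<and> (\<forall>s::'r. of_nat p * s \<noteq> 1)"
  shows "n dvd r"
proof -
  define g where "g = gcd n r"
  define m where "m = n div g"
  define r' where "r' = r div g"
  have gpos: "g > 0" unfolding g_def using n by simp
  have nm: "n = m * g" unfolding m_def g_def by simp
  have rr: "r = r' * g" unfolding r'_def g_def by simp
  have "(of_nat g :: 'r) \<noteq> 0"
    using of_nat_nonzero_primes[of g] P gpos unfolding g_def
    by (meson dvd_trans gcd_dvd1)
  moreover have "of_nat g * (of_nat m * \<alpha>) = of_nat g * (of_nat r' :: 'r)"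
    using eq unfolding nm rr by (simp add: ac_simps)
  ultimately have eq2: "of_nat m * \<alpha> = (of_nat r' :: 'r)" by simp
  have cop: "coprime m r'" unfolding m_def r'_def g_def using n div_gcd_coprime by blast
  obtain u v where uv: "u * int m + v * int r' = gcd (int m) (int r')" using bezout_int by blast
  have "gcd (int m) (int r') = 1" using cop by simp
  with uv have "(of_int (u * int m + v * int r') :: 'r) = 1" by simp
  then have "of_int u * of_nat m + of_int v * (of_nat m * \<alpha>) = (1::'r)"
    using eq2 by simp
  then have one: "of_nat m * (of_int u + of_int v * \<alpha>) = (1::'r)"
    by (simp add: algebra_simps)
  have "m = 1"
  proof (rule ccontr)
    assume "m \<noteq> 1"
    then obtain p where p: "prime p" "p dvd m" using prime_factor_nat by blast
    then obtain k where k: "m = p * k" by (auto elim: dvdE)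
    have "of_nat p * (of_nat k * (of_int u + of_int v * \<alpha>)) = (1::'r)"
      using one k by (simp add: ac_simps)
    have pn: "p dvd n" using p(2) unfolding nm by (rule dvd_mult2)
    have "(of_nat p :: 'r) \<noteq> 0 \<and> (\<forall>s. (of_nat p :: 'r) * s \<noteq> 1)"
      by (rule mp[OF spec[OF P, of p]]) (simp add: p(1) pn)
    then show False using \<open>of_nat p * (of_nat k * (of_int u + of_int v * \<alpha>)) = (1::'r)\<close> by blast
  qed
  then have "n = g" using nm by simp
  then show ?thesis using rr by simp
qed

definition dlt :: "'b \<Rightarrow> 'b \<Rightarrow> 'r::idom" where
  "dlt x = (\<lambda>y. if y = x then 1 else 0)"

lemma dlt_mod: "x \<in> X \<Longrightarrow> dlt x \<in> perm_module X"
  unfolding dlt_def perm_module_def by auto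

lemma End_mod: "T \<in> End_RG G \<phi> X \<Longrightarrow> f \<in> perm_module X \<Longrightarrow> T f \<in> perm_module X"
  unfolding End_RG_def by blast
lemma End_add: "T \<in> End_RG G \<phi> X \<Longrightarrow> f \<in> perm_module X \<Longrightarrow> h \<in> perm_module X \<Longrightarrow>
   T (\<lambda>y. f y + h y) = (\<lambda>y. T f y + T h y)"
  unfolding End_RG_def by blast
lemma End_smul: "T \<in> End_RG G \<phi> X \<Longrightarrow> f \<in> perm_module X \<Longrightarrow>
   T (\<lambda>y. r * f y) = (\<lambda>y. r * T f y)"
  unfolding End_RG_def by blast
lemma End_act: "T \<in> End_RG G \<phi> X \<Longrightarrow> g \<in> carrier G \<Longrightarrow> f \<in> perm_module X \<Longrightarrow>
   T (perm_act G \<phi> X g f) = perm_act G \<phi> X g (T f)"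
  unfolding End_RG_def by blast

lemma End_zero: "T \<in> End_RG G \<phi> X \<Longrightarrow> T (\<lambda>y. 0) = (\<lambda>y. 0)"
proof -
  assume T: "T \<in> End_RG G \<phi> X"
  have z: "(\<lambda>y. 0) \<in> perm_module X" unfolding perm_module_def by simp
  show ?thesis using End_smul[OF T z, of 0] by simp
qed

lemma End_lincomb:
  assumes T: "T \<in> End_RG G \<phi> X" and fin: "finite A" and AX: "A \<subseteq> X"
  shows "T (\<lambda>y. \<Sum>x\<in>A. c x * dlt x y) = (\<lambda>y. \<Sum>x\<in>A. c x * T (dlt x) y)"
  using fin AX
proof (induction A rule: finite_induct)
  case empty
  then show ?case using End_zero[OF T] by simp
next
  case (insert a A)
  have m1: "(\<lambda>y. c a * dlt a y) \<in> perm_module X"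
    using insert.prems unfolding perm_module_def dlt_def by auto
  have m2: "(\<lambda>y. \<Sum>x\<in>A. c x * dlt x y) \<in> perm_module X"
    using insert.prems unfolding perm_module_def dlt_def by (auto intro!: sum.neutral)
  have add: "T (\<lambda>y. (\<lambda>y. c a * dlt a y) y + (\<lambda>y. \<Sum>x\<in>A. c x * dlt x y) y)
      = (\<lambda>y. T (\<lambda>y. c a * dlt a y) y + T (\<lambda>y. \<Sum>x\<in>A. c x * dlt x y) y)"
    by (rule End_add[OF T m1 m2])
  have hom: "T (\<lambda>y. c a * dlt a y) = (\<lambda>y. c a * T (dlt a) y)"
    using End_smul[OF T dlt_mod[of a X]] insert.prems by simp
  show ?case using insert add hom by simp
qed

lemma mod_expand:
  assumes "f \<in> perm_module X" "finite X"
  shows "f = (\<lambda>y. \<Sum>x\<in>X. f x * dlt x y)"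
proof
  fix y
  show "f y = (\<Sum>x\<in>X. f x * dlt x y)"
  proof (cases "y \<in> X")
    case True
    then show ?thesis using assms(2) unfolding dlt_def by (simp add: if_distrib cong: if_cong)
  next
    case False
    then show ?thesis using assms unfolding dlt_def perm_module_def by (auto intro!: sum.neutral)
  qed
qed

lemma End_expand:
  assumes T: "T \<in> End_RG G \<phi> X" and "f \<in> perm_module X" "finite X"
  shows "T f = (\<lambda>y. \<Sum>x\<in>X. f x * T (dlt x) y)"
proof -
  have "T f = T (\<lambda>y. \<Sum>x\<in>X. f x * dlt x y)" using mod_expand[OF assms(2,3)] by simp
  also have "\<dots> = (\<lambda>y. \<Sum>x\<in>X. f x * T (dlt x) y)" using End_lincomb[OF T assms(3)] by simp
  finally show ?thesis .
qed

lemma to_fract_sum: "to_fract (\<Sum>x\<in>A. f x) = (\<Sum>x\<in>A. to_fract (f x))"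
  by (induction A rule: infinite_finite_induct) auto

lemma to_fract_of_nat: "to_fract (of_nat n) = of_nat n"
  by (induction n) auto

lemma orbit_inv:
  fixes G (structure)
  assumes A: "group_action G X \<phi>" and x0: "x0 \<in> X" and h: "h \<in> carrier G" and y: "y \<in> X"
  shows "\<phi> h y \<in> orbit G \<phi> x0 \<longleftrightarrow> y \<in> orbit G \<phi> x0"
proof -
  interpret group_action G X \<phi> by (rule A)
  interpret group G using group_hom group_hom.axioms(1) by auto
  show ?thesis
  proof
    assume "\<phi> h y \<in> orbit G \<phi> x0"
    then obtain a where a: "a \<in> carrier G" "\<phi> h y = \<phi> a x0" unfolding orbit_def by blast
    have "y = \<phi> (inv h) (\<phi> h y)" using orbit_sym_aux[OF h y refl] by simp
    also have "\<dots> = \<phi> (inv h \<otimes> a) x0" using a composition_rule[OF x0, of "inv h" a] h by simp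
    finally show "y \<in> orbit G \<phi> x0" unfolding orbit_def using a h by blast
  next
    assume "y \<in> orbit G \<phi> x0"
    then obtain a where a: "a \<in> carrier G" "y = \<phi> a x0" unfolding orbit_def by blast
    have "\<phi> h y = \<phi> (h \<otimes> a) x0" using a composition_rule[OF x0 h, of a] by simp
    then show "\<phi> h y \<in> orbit G \<phi> x0" unfolding orbit_def using a h by blast
  qed
qed

lemma orbit_sub:
  fixes G (structure)
  assumes A: "group_action G X \<phi>" and x0: "x0 \<in> X"
  shows "orbit G \<phi> x0 \<subseteq> X"
proof -
  interpret group_action G X \<phi> by (rule A)
  show ?thesis unfolding orbit_def using element_image x0 by blast
qed

lemma orbit_self:
  fixes G (structure)
  assumes A: "group_action G X \<phi>" and x0: "x0 \<in> X"
  shows "x0 \<in> orbit G \<phi> x0"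
proof -
  interpret group_action G X \<phi> by (rule A)
  show ?thesis using orbit_refl x0 by blast
qed

lemma orbit_bij:
  fixes G (structure)
  assumes A: "group_action G X \<phi>" and x0: "x0 \<in> X" and h: "h \<in> carrier G"
  shows "bij_betw (\<phi> h) (orbit G \<phi> x0) (orbit G \<phi> x0)"
proof -
  interpret group_action G X \<phi> by (rule A)
  interpret group G using group_hom group_hom.axioms(1) by auto
  let ?O = "orbit G \<phi> x0"
  have sub: "?O \<subseteq> X" by (rule orbit_sub[OF A x0])
  have "inj_on (\<phi> h) ?O" using inj_prop[OF h] sub inj_on_subset by blast
  moreover have "\<phi> h ` ?O = ?O"
  proof
    show "\<phi> h ` ?O \<subseteq> ?O" using orbit_inv[OF A x0 h] sub by blast
    show "?O \<subseteq> \<phi> h ` ?O"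
    proof
      fix y assume yO: "y \<in> ?O"
      then have yX: "y \<in> X" using sub by blast
      have ih: "inv h \<in> carrier G" using h by simp
      have zO: "\<phi> (inv h) y \<in> ?O" using orbit_inv[OF A x0 ih yX] yO by simp
      have "\<phi> (inv (inv h)) (\<phi> (inv h) y) = y" using orbit_sym_aux[OF ih yX refl] .
      then have "\<phi> h (\<phi> (inv h) y) = y" using h by simp
      then show "y \<in> \<phi> h ` ?O" using zO by force
    qed
  qed
  ultimately show ?thesis unfolding bij_betw_def by blast
qed

lemma perm_act_dlt:
  fixes G (structure)
  assumes A: "group_action G X \<phi>" and g: "g \<in> carrier G" and x: "x \<in> X"
  shows "perm_act G \<phi> X g (dlt x) = dlt (\<phi> g x)"
proof
  interpret group_action G X \<phi> by (rule A)
  interpret group G using group_hom group_hom.axioms(1) by auto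
  fix y
  have gx: "\<phi> g x \<in> X" using element_image g x by blast
  show "perm_act G \<phi> X g (dlt x) y = dlt (\<phi> g x) y"
  proof (cases "y \<in> X")
    case True
    have "\<phi> (inv g) y = x \<longleftrightarrow> y = \<phi> g x"
    proof
      assume "\<phi> (inv g) y = x"
      then have "\<phi> (inv (inv g)) x = y" using orbit_sym_aux[of "inv g" y x] g True by simp
      then show "y = \<phi> g x" using g by simp
    next
      assume "y = \<phi> g x"
      then show "\<phi> (inv g) y = x" using orbit_sym_aux[OF g x] by simp
    qed
    then show ?thesis using True unfolding perm_act_def dlt_def by simp
  next
    case False
    then show ?thesis using gx unfolding perm_act_def dlt_def by auto
  qed
qed

definition projO :: "'b set \<Rightarrow> ('b \<Rightarrow> 'r::idom) \<Rightarrow> ('b \<Rightarrow> 'r)" where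
  "projO S f = (\<lambda>y. if y \<in> S then f y else 0)"

definition JO :: "'b set \<Rightarrow> 'b set \<Rightarrow> ('b \<Rightarrow> 'r::idom) \<Rightarrow> ('b \<Rightarrow> 'r)" where
  "JO O1 O2 f = (\<lambda>y. if y \<in> O2 then (\<Sum>x\<in>O1. f x) else 0)"

lemma projO_End:
  fixes G (structure)
  assumes A: "group_action G X \<phi>" and x0: "x0 \<in> X"
  shows "projO (orbit G \<phi> x0) \<in> End_RG G \<phi> X"
proof -
  interpret group_action G X \<phi> by (rule A)
  interpret group G using group_hom group_hom.axioms(1) by auto
  let ?O = "orbit G \<phi> x0"
  have sub: "?O \<subseteq> X" by (rule orbit_sub[OF A x0])
  show ?thesis unfolding End_RG_def
  proof (intro CollectI conjI ballI allI)
    fix f assume "f \<in> perm_module X"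
    then show "projO ?O f \<in> perm_module X" using sub unfolding projO_def perm_module_def by auto
  next
    fix f h
    show "projO ?O (\<lambda>y. f y + h y) = (\<lambda>y. projO ?O f y + projO ?O h y)"
      unfolding projO_def by auto
  next
    fix r and f
    show "projO ?O (\<lambda>y. r * f y) = (\<lambda>y. r * projO ?O f y)"
      unfolding projO_def by auto
  next
    fix g and f assume g: "g \<in> carrier G"
    have ig: "inv g \<in> carrier G" using g by simp
    show "projO ?O (perm_act G \<phi> X g f) = perm_act G \<phi> X g (projO ?O f)"
      unfolding projO_def perm_act_def using orbit_inv[OF A x0 ig] sub by (auto simp: fun_eq_iff)
  qed
qed

lemma JO_End:
  fixes G (structure)
  assumes A: "group_action G X \<phi>" and x1: "x1 \<in> X" and x2: "x2 \<in> X"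
  shows "JO (orbit G \<phi> x1) (orbit G \<phi> x2) \<in> End_RG G \<phi> X"
proof -
  interpret group_action G X \<phi> by (rule A)
  interpret group G using group_hom group_hom.axioms(1) by auto
  let ?O1 = "orbit G \<phi> x1"
  let ?O2 = "orbit G \<phi> x2"
  have sub1: "?O1 \<subseteq> X" by (rule orbit_sub[OF A x1])
  have sub2: "?O2 \<subseteq> X" by (rule orbit_sub[OF A x2])
  show ?thesis unfolding End_RG_def
  proof (intro CollectI conjI ballI allI)
    fix f assume "f \<in> perm_module X"
    then show "JO ?O1 ?O2 f \<in> perm_module X" using sub2 unfolding JO_def perm_module_def by auto
  next
    fix f h
    show "JO ?O1 ?O2 (\<lambda>y. f y + h y) = (\<lambda>y. JO ?O1 ?O2 f y + JO ?O1 ?O2 h y)"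
      unfolding JO_def by (auto simp: sum.distrib)
  next
    fix r and f
    show "JO ?O1 ?O2 (\<lambda>y. r * f y) = (\<lambda>y. r * JO ?O1 ?O2 f y)"
      unfolding JO_def by (auto simp: sum_distrib_left)
  next
    fix g and f assume g: "g \<in> carrier G"
    have ig: "inv g \<in> carrier G" using g by simp
    have "(\<Sum>x\<in>?O1. perm_act G \<phi> X g f x) = (\<Sum>x\<in>?O1. f (\<phi> (inv g) x))"
      using sub1 unfolding perm_act_def by (intro sum.cong) auto
    also have "\<dots> = (\<Sum>x\<in>?O1. f x)"
      by (rule sum.reindex_bij_betw[OF orbit_bij[OF A x1 ig]])
    finally have S: "(\<Sum>x\<in>?O1. perm_act G \<phi> X g f x) = (\<Sum>x\<in>?O1. f x)" .
    show "JO ?O1 ?O2 (perm_act G \<phi> X g f) = perm_act G \<phi> X g (JO ?O1 ?O2 f)"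
      unfolding JO_def S unfolding perm_act_def using orbit_inv[OF A x2 ig] sub2
      by (auto simp: fun_eq_iff)
  qed
qed

lemma sum_delta_l:
  assumes "finite A"
  shows "(\<Sum>w\<in>A. (if x = w then 1 else 0) * f w) = (if x \<in> A then f x else (0::'a::comm_ring_1))"
proof -
  have "(\<Sum>w\<in>A. (if x = w then 1 else 0) * f w) = (\<Sum>w\<in>A. if x = w then f w else 0)"
    by (rule sum.cong) auto
  then show ?thesis using assms by (simp add: sum.delta)
qed

lemma sum_delta_r:
  assumes "finite A"
  shows "(\<Sum>w\<in>A. f w * (if w = y then 1 else 0)) = (if y \<in> A then f y else (0::'a::comm_ring_1))"
proof -
  have "(\<Sum>w\<in>A. f w * (if w = y then 1 else 0)) = (\<Sum>w\<in>A. if w = y then f w else 0)"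
    by (rule sum.cong) auto
  then show ?thesis using assms by (simp add: sum.delta')
qed

lemma orbit_type:
  fixes G (structure) and e :: "('b \<Rightarrow> 'r::idom) \<Rightarrow> ('b \<Rightarrow> 'r)"
  assumes A: "group_action G X \<phi>" and fin: "finite X" and cI: "central_idempotent G \<phi> X e"
    and x0: "x0 \<in> X"
    and P: "\<forall>p::nat. prime p \<and> p dvd card (orbit G \<phi> x0) \<longrightarrow>
              (of_nat p :: 'r) \<noteq> 0 \<and> (\<forall>s::'r. of_nat p * s \<noteq> 1)"
  shows "(\<forall>y\<in>orbit G \<phi> x0. e (dlt y) = (\<lambda>_. 0)) \<or> (\<forall>y\<in>orbit G \<phi> x0. e (dlt y) = dlt y)"
proof -
  interpret group_action G X \<phi> by (rule A)
  interpret group G using group_hom group_hom.axioms(1) by auto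
  define O' where "O' = orbit G \<phi> x0"
  define M where "M = (\<lambda>x y. e (dlt y) x)"
  have cI': "e \<in> End_RG G \<phi> X \<and> (\<forall>f\<in>perm_module X. e (e f) = e f) \<and>
     (\<forall>T\<in>End_RG G \<phi> X. \<forall>f\<in>perm_module X. e (T f) = T (e f))"
    using cI unfolding central_idempotent_def .
  have eE: "e \<in> End_RG G \<phi> X" using conjunct1[OF cI'] .
  have idem: "\<forall>f\<in>perm_module X. e (e f) = e f" using conjunct1[OF conjunct2[OF cI']] .
  have comm: "\<forall>T\<in>End_RG G \<phi> X. \<forall>f\<in>perm_module X. e (T f) = T (e f)"
    using conjunct2[OF conjunct2[OF cI']] .
  have sub: "O' \<subseteq> X" unfolding O'_def by (rule orbit_sub[OF A x0])
  have finO: "finite O'" using finite_subset[OF sub fin] .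
  have x0O: "x0 \<in> O'" unfolding O'_def by (rule orbit_self[OF A x0])
  have cpos: "card O' > 0" using finO x0O by (auto simp: card_gt_0_iff)
  have block: "\<And>y x. y \<in> O' \<Longrightarrow> x \<notin> O' \<Longrightarrow> M x y = 0"
  proof -
    fix y x assume y: "y \<in> O'" and x: "x \<notin> O'"
    have yX: "y \<in> X" using y sub by blast
    have "e (projO O' (dlt y)) = projO O' (e (dlt y))"
      using comm projO_End[OF A x0] dlt_mod[OF yX] unfolding O'_def by blast
    moreover have "projO O' (dlt y) = dlt y" using y unfolding projO_def dlt_def by auto
    ultimately have "e (dlt y) = projO O' (e (dlt y))" by metis
    then have "e (dlt y) x = projO O' (e (dlt y)) x" by metis
    then show "M x y = 0" unfolding M_def using x by (simp add: projO_def)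
  qed
  have idemO: "\<forall>x\<in>O'. \<forall>y\<in>O'. (\<Sum>w\<in>O'. M x w * M w y) = M x y"
  proof (intro ballI)
    fix x y assume x: "x \<in> O'" and y: "y \<in> O'"
    have yX: "y \<in> X" using y sub by blast
    have "e (e (dlt y)) = e (dlt y)" using idem dlt_mod[OF yX] by blast
    moreover have "e (e (dlt y)) = (\<lambda>u. \<Sum>w\<in>X. e (dlt y) w * e (dlt w) u)"
      by (rule End_expand[OF eE End_mod[OF eE dlt_mod[OF yX]] fin])
    ultimately have "e (dlt y) = (\<lambda>u. \<Sum>w\<in>X. e (dlt y) w * e (dlt w) u)" by simp
    then have "M x y = (\<Sum>w\<in>X. M w y * M x w)" unfolding M_def using fun_cong[of _ _ x] by blast
    also have "\<dots> = (\<Sum>w\<in>O'. M w y * M x w)"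
      using block y by (intro sum.mono_neutral_right[OF fin sub]) auto
    finally show "(\<Sum>w\<in>O'. M x w * M w y) = M x y" by (simp add: mult.commute)
  qed
  have diag: "\<And>y. y \<in> O' \<Longrightarrow> M y y = M x0 x0"
  proof -
    fix y assume "y \<in> O'"
    then obtain g where g: "g \<in> carrier G" "y = \<phi> g x0" unfolding O'_def orbit_def by blast
    have yX: "\<phi> g x0 \<in> X" using element_image g x0 by blast
    have "e (dlt (\<phi> g x0)) = e (perm_act G \<phi> X g (dlt x0))" using perm_act_dlt[OF A g(1) x0] by metis
    also have "\<dots> = perm_act G \<phi> X g (e (dlt x0))" by (rule End_act[OF eE g(1) dlt_mod[OF x0]])
    finally have "M (\<phi> g x0) (\<phi> g x0) = perm_act G \<phi> X g (e (dlt x0)) (\<phi> g x0)"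
      unfolding M_def by simp
    also have "\<dots> = e (dlt x0) x0"
      unfolding perm_act_def using yX orbit_sym_aux[OF g(1) x0 refl] by simp
    finally show "M y y = M x0 x0" using g unfolding M_def by simp
  qed
  have tr: "(\<Sum>x\<in>O'. M x x) = of_nat (card O') * M x0 x0"
    using diag by simp
  have idemF: "\<forall>x\<in>O'. \<forall>y\<in>O'. (\<Sum>w\<in>O'. to_fract (M x w) * to_fract (M w y)) = to_fract (M x y)"
  proof (intro ballI)
    fix x y assume xy: "x \<in> O'" "y \<in> O'"
    have "(\<Sum>w\<in>O'. to_fract (M x w) * to_fract (M w y)) = to_fract (\<Sum>w\<in>O'. M x w * M w y)"
      by (simp add: to_fract_sum)
    then show "(\<Sum>w\<in>O'. to_fract (M x w) * to_fract (M w y)) = to_fract (M x y)" using idemO xy by simp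
  qed
  obtain r where r: "r \<le> card O'" "(\<Sum>x\<in>O'. to_fract (M x x)) = of_nat r"
    "r = 0 \<longrightarrow> (\<forall>x\<in>O'. \<forall>y\<in>O'. to_fract (M x y) = 0)"
    using idem_trace[OF finO idemF] by blast
  have "to_fract (\<Sum>x\<in>O'. M x x) = to_fract (of_nat r)"
    using r(2) by (simp add: to_fract_sum to_fract_of_nat)
  then have "(\<Sum>x\<in>O'. M x x) = of_nat r" by (simp only: to_fract_eq_iff)
  then have r2: "of_nat (card O') * M x0 x0 = of_nat r" using tr by simp
  have PO: "\<forall>p. prime p \<and> p dvd card O' \<longrightarrow> (of_nat p :: 'r) \<noteq> 0 \<and> (\<forall>s::'r. of_nat p * s \<noteq> 1)"
    using P unfolding O'_def .
  have "card O' dvd r" by (rule nt_dvd[OF cpos r2 PO])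
  then have "r \<noteq> 0 \<Longrightarrow> card O' \<le> r" by (simp add: dvd_imp_le)
  then have rc: "r = 0 \<or> r = card O'" using r(1) by linarith
  show ?thesis
  proof (cases "r = 0")
    case True
    then have "\<forall>x\<in>O'. \<forall>y\<in>O'. M x y = 0" using r(3) by simp
    then have "\<forall>y\<in>O'. e (dlt y) = (\<lambda>_. 0)"
      using block unfolding M_def by (auto simp: fun_eq_iff)
    then show ?thesis unfolding O'_def by blast
  next
    case False
    then have rC: "r = card O'" using rc by simp
    define N where "N = (\<lambda>x y. (if x = y then 1 else 0) - M x y)"
    have idemN: "\<forall>x\<in>O'. \<forall>y\<in>O'. (\<Sum>w\<in>O'. N x w * N w y) = N x y"
    proof (intro ballI)
      fix x y assume x: "x \<in> O'" and y: "y \<in> O'"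
      have "(\<Sum>w\<in>O'. N x w * N w y) =
          (\<Sum>w\<in>O'. (if x = w then 1 else 0) * (if w = y then 1 else 0))
        - (\<Sum>w\<in>O'. (if x = w then 1 else 0) * M w y)
        - (\<Sum>w\<in>O'. M x w * (if w = y then 1 else 0))
        + (\<Sum>w\<in>O'. M x w * M w y)"
        unfolding N_def sum_subtractf[symmetric] sum.distrib[symmetric]
        by (rule sum.cong) (auto simp: algebra_simps)
      also have "\<dots> = (if x = y then 1 else 0) - M x y - M x y + M x y"
        using x y idemO sum_delta_l[OF finO, of x "\<lambda>w. if w = y then 1 else 0"]
          sum_delta_l[OF finO, of x "\<lambda>w. M w y"] sum_delta_r[OF finO, of "\<lambda>w. M x w" y]
        by simp
      finally show "(\<Sum>w\<in>O'. N x w * N w y) = N x y" unfolding N_def by simp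
    qed
    have idemNF: "\<forall>x\<in>O'. \<forall>y\<in>O'. (\<Sum>w\<in>O'. to_fract (N x w) * to_fract (N w y)) = to_fract (N x y)"
  proof (intro ballI)
      fix x y assume xy: "x \<in> O'" "y \<in> O'"
      have "(\<Sum>w\<in>O'. to_fract (N x w) * to_fract (N w y)) = to_fract (\<Sum>w\<in>O'. N x w * N w y)"
        by (simp add: to_fract_sum)
      then show "(\<Sum>w\<in>O'. to_fract (N x w) * to_fract (N w y)) = to_fract (N x y)" using idemN xy by simp
    qed
    obtain r' where r': "r' \<le> card O'" "(\<Sum>x\<in>O'. to_fract (N x x)) = of_nat r'"
      "r' = 0 \<longrightarrow> (\<forall>x\<in>O'. \<forall>y\<in>O'. to_fract (N x y) = 0)"
      using idem_trace[OF finO idemNF] by blast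
    have trN: "(\<Sum>x\<in>O'. N x x) = of_nat (card O') * (1 - M x0 x0)"
      using diag unfolding N_def by simp
    have "to_fract (\<Sum>x\<in>O'. N x x) = to_fract (of_nat r')"
      using r'(2) by (simp add: to_fract_sum to_fract_of_nat)
    then have "(\<Sum>x\<in>O'. N x x) = of_nat r'" by (simp only: to_fract_eq_iff)
    then have r2': "of_nat (card O') * (1 - M x0 x0) = of_nat r'" using trN by simp
    have "card O' dvd r'" by (rule nt_dvd[OF cpos r2' PO])
    then have "r' \<noteq> 0 \<Longrightarrow> card O' \<le> r'" by (simp add: dvd_imp_le)
    then have rc': "r' = 0 \<or> r' = card O'" using r'(1) by linarith
    have nz: "(of_nat (card O') :: 'r) \<noteq> 0"
      using of_nat_nonzero_primes[of "card O'"] PO cpos by blast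
    have "of_nat (card O') * (1 - M x0 x0) = (0::'r)"
      using r2 rC by (simp add: algebra_simps)
    then have "r' = 0" using rc' r2' nz by auto
    then have "\<forall>x\<in>O'. \<forall>y\<in>O'. N x y = 0" using r'(3) by simp
    then have hyp: "\<forall>x\<in>O'. \<forall>y\<in>O'. M x y = (if x = y then 1 else 0)" unfolding N_def by simp
    have "\<forall>y\<in>O'. e (dlt y) = dlt y"
    proof (intro ballI ext)
      fix y x assume y: "y \<in> O'"
      show "e (dlt y) x = dlt y x"
      proof (cases "x \<in> O'")
        case True
        then show ?thesis using hyp y unfolding M_def dlt_def by simp
      next
        case False
        then have "x \<noteq> y" using y by blast
        then show ?thesis using block[OF y False] unfolding M_def dlt_def by simp
      qed
    qed
    then show ?thesis unfolding O'_def by blast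
  qed
qed

theorem proposition3p3:
  fixes G :: "('a, 'c) monoid_scheme" and \<phi> :: "'a \<Rightarrow> 'b \<Rightarrow> 'b" and X :: "'b set"
    and e :: "('b \<Rightarrow> 'r::idom) \<Rightarrow> ('b \<Rightarrow> 'r)"
  assumes "group G" and "finite (carrier G)"
    and "group_action G X \<phi>" and "finite X"
    and "\<forall>x \<in> X. \<forall>p::nat. prime p \<and> p dvd card (rcosets\<^bsub>G\<^esub> (stabilizer G \<phi> x)) \<longrightarrow>
           {of_nat p * r | r::'r. True} \<noteq> {0} \<and> {of_nat p * r | r::'r. True} \<noteq> UNIV"
    and "central_idempotent G \<phi> X e"
  shows "(\<forall>f \<in> perm_module X. e f = (\<lambda>_. 0)) \<or> (\<forall>f \<in> perm_module X. e f = f)"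
proof -
  note A = assms(3)
  note fin = assms(4)
  note cI = assms(6)
  have cI': "e \<in> End_RG G \<phi> X \<and> (\<forall>f\<in>perm_module X. e (e f) = e f) \<and>
     (\<forall>T\<in>End_RG G \<phi> X. \<forall>f\<in>perm_module X. e (T f) = T (e f))"
    using cI unfolding central_idempotent_def .
  have eE: "e \<in> End_RG G \<phi> X" using conjunct1[OF cI'] .
  have comm: "\<forall>T\<in>End_RG G \<phi> X. \<forall>f\<in>perm_module X. e (T f) = T (e f)"
    using conjunct2[OF conjunct2[OF cI']] .
  have P: "\<forall>p::nat. prime p \<and> p dvd card (orbit G \<phi> x0) \<longrightarrow>
              (of_nat p :: 'r) \<noteq> 0 \<and> (\<forall>s::'r. of_nat p * s \<noteq> 1)" if x0: "x0 \<in> X" for x0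
  proof (intro allI impI)
    fix p :: nat assume p: "prime p \<and> p dvd card (orbit G \<phi> x0)"
    have "card (rcosets\<^bsub>G\<^esub> (stabilizer G \<phi> x0)) = card (orbit G \<phi> x0)"
      using bij_betw_same_card[OF group_action.orbit_stab_fun_is_bij[OF A x0]] .
    then have H: "{of_nat p * r | r::'r. True} \<noteq> {0} \<and> {of_nat p * r | r::'r. True} \<noteq> UNIV"
      using assms(5) x0 p by auto
    show "(of_nat p :: 'r) \<noteq> 0 \<and> (\<forall>s::'r. of_nat p * s \<noteq> 1)"
    proof (intro conjI allI notI)
      assume "(of_nat p :: 'r) = 0"
      then have "{of_nat p * r | r::'r. True} = {0}" by auto
      then show False using H by blast
    next
      fix s :: 'r assume s: "of_nat p * s = 1"
      have mem: "t \<in> {of_nat p * r | r::'r. True}" for t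
      proof -
        have "t = of_nat p * (s * t)" using s by (simp add: mult.assoc[symmetric])
        then show ?thesis by blast
      qed
      have "{of_nat p * r | r::'r. True} = UNIV" using mem by blast
      then show False using H by blast
    qed
  qed
  have OT: "(\<forall>y\<in>orbit G \<phi> x0. e (dlt y) = (\<lambda>_. 0)) \<or> (\<forall>y\<in>orbit G \<phi> x0. e (dlt y) = dlt y)"
    if x0: "x0 \<in> X" for x0
    by (rule orbit_type[OF A fin cI x0 P[OF x0]])
  show ?thesis
  proof (cases "\<forall>x\<in>X. e (dlt x) = (\<lambda>_. 0)")
    case True
    have "\<forall>f\<in>perm_module X. e f = (\<lambda>_. 0)"
    proof
      fix f :: "'b \<Rightarrow> 'r" assume f: "f \<in> perm_module X"
      show "e f = (\<lambda>_. 0)" using End_expand[OF eE f fin] True by simp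
    qed
    then show ?thesis by blast
  next
    case False
    then obtain x1 where x1: "x1 \<in> X" and nz: "e (dlt x1) \<noteq> (\<lambda>_. 0)" by blast
    have x1O: "x1 \<in> orbit G \<phi> x1" by (rule orbit_self[OF A x1])
    have id1: "\<forall>y\<in>orbit G \<phi> x1. e (dlt y) = dlt y" using OT[OF x1] x1O nz by blast
    have all: "\<forall>x2\<in>X. e (dlt x2) = dlt x2"
    proof (rule ballI, rule ccontr)
      fix x2 assume x2: "x2 \<in> X" and ne: "e (dlt x2) \<noteq> dlt x2"
      have x2O: "x2 \<in> orbit G \<phi> x2" by (rule orbit_self[OF A x2])
      have z2: "\<forall>y\<in>orbit G \<phi> x2. e (dlt y) = (\<lambda>_. 0)" using OT[OF x2] x2O ne by blast
      define O1 where "O1 = orbit G \<phi> x1"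
      define O2 where "O2 = orbit G \<phi> x2"
      define ind where "ind = (\<lambda>y. if y \<in> O2 then (1::'r) else 0)"
      have sub1: "O1 \<subseteq> X" unfolding O1_def by (rule orbit_sub[OF A x1])
      have sub2: "O2 \<subseteq> X" unfolding O2_def by (rule orbit_sub[OF A x2])
      have fin1: "finite O1" using finite_subset[OF sub1 fin] .
      have J: "JO O1 O2 (dlt x1) = ind"
      proof
        fix y
        have "(\<Sum>x\<in>O1. dlt x1 x :: 'r) = 1"
          using fin1 x1O unfolding O1_def[symmetric] dlt_def by (simp add: sum.delta')
        then show "JO O1 O2 (dlt x1) y = ind y" unfolding JO_def ind_def by simp
      qed
      have "e (JO O1 O2 (dlt x1)) = JO O1 O2 (e (dlt x1))"
        using comm JO_End[OF A x1 x2] dlt_mod[OF x1] unfolding O1_def O2_def by blast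
      then have "e ind = ind" using J id1 x1O unfolding O1_def by metis
      moreover have indm: "ind \<in> perm_module X" using sub2 unfolding ind_def perm_module_def by auto
      moreover have "e ind = (\<lambda>_. 0)"
      proof
        fix y
        have "e ind y = (\<Sum>x\<in>X. ind x * e (dlt x) y)" using End_expand[OF eE indm fin] by metis
        also have "\<dots> = 0"
        proof (rule sum.neutral, rule ballI)
          fix x assume "x \<in> X"
          show "ind x * e (dlt x) y = 0"
            using z2 unfolding ind_def O2_def by (cases "x \<in> orbit G \<phi> x2") auto
        qed
        finally show "e ind y = 0" .
      qed
      ultimately have "ind x2 = 0" by metis
      then show False using x2O unfolding ind_def O2_def by simp
    qed
    have "\<forall>f\<in>perm_module X. e f = f"
    proof
      fix f :: "'b \<Rightarrow> 'r" assume f: "f \<in> perm_module X"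
      have "e f = (\<lambda>y. \<Sum>x\<in>X. f x * e (dlt x) y)" by (rule End_expand[OF eE f fin])
      also have "\<dots> = (\<lambda>y. \<Sum>x\<in>X. f x * dlt x y)" using all by simp
      also have "\<dots> = f" using mod_expand[OF f fin] by simp
      finally show "e f = f" .
    qed
    then show ?thesis by blast
  qed
qed

end
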